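(* Let $\mathcal{A}$ be a finite-dimensional bialgebra over $\mathbb{C}$ with multiplication written by juxtaposition, unit $1_{\mathcal{A}}$, comultiplication $\Delta$ and counit $\epsilon$. Let $\rho:\mathcal{A}\to M_{d_\rho}(\mathbb{C})$ be a $d_\rho$-dimensional representation with matrix entries $\rho_{ab}(x)$, and let $(v_{ij})_{1\le i,j\le d_v}$ be a $d_v$-dimensional corepresentation of $\mathcal{A}$. Fix a basis $B(\mathcal{A})$ of $\mathcal{A}$ with dual basis $\{\delta_x\}_{x\in B(\mathcal{A})}$ of $\mathcal{A}^*$, $\delta_x(y)=\delta_{x,y}$. For $a,b\in\{1,\dots,d_\rho\}$, $i,j\in\{1,\dots,d_v\}$, $x,y\in B(\mathcal{A})$ define $$U^{ab}_{ij}=\rho_{ab}(v_{ij}),\quad R^{yx}_{ab}=(\delta_y\otimes\rho_{ab})(\Delta(x)),\quad V^{yx}_{ij}=\delta_y(x\,v_{ij}),\quad u_x=\delta_x(1_{\mathcal{A}}),\quad e_x=\epsilon(x).$$ Then for all $a,b,i,j,x,y$: (1) $\sum_{z\in B(\mathcal{A})}R^{yz}_{ab}V^{zx}_{ij}=\sum_{z\in B(\mathcal{A})}\sum_{k=1}^{d_v}\sum_{c=1}^{d_\rho}V^{yz}_{ik}\,R^{zx}_{ac}\,U^{cb}_{kj}$; (2) $\sum_{y\in B(\mathcal{A})}e_y V^{yx}_{ij}=\delta_{ij}\,e_x$; (3) $\sum_{x\in B(\mathcal{A})}R^{yx}_{ab}u_x=\delta_{ab}\,u_y$; (4) $\sum_{x\in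 B(\mathcal{A})}e_xu_x=1$.
   Context: A bialgebra is a unital associative algebra and a coassociative counital coalgebra such that $\Delta(xy)=\Delta(x)\Delta(y)$, $\Delta(1)=1\otimes1$ and $\epsilon(xy)=\epsilon(x)\epsilon(y)$. A $d$-dimensional representation is a linear map $\rho:\mathcal{A}\to M_d(\mathbb{C})$ with $\rho(1)=\mathbb{1}$ and $\rho(xy)=\rho(x)\rho(y)$. A $d$-dimensional corepresentation is a $d\times d$ matrix $(v_{ij})$ of elements of $\mathcal{A}$ with $\Delta(v_{ij})=\sum_{k=1}^d v_{ik}\otimes v_{kj}$ and $\epsilon(v_{ij})=\delta_{ij}$. *)

theory Defs
  imports Complex_Main
begin

text \<open>Elements of the algebraic tensor product A (x) A are represented as finite sums of simple
  tensors, i.e. lists of pairs [(a1,b1),...] standing for a1 (x) b1 + ... ; two such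
  representations denote the same tensor iff they agree on every bilinear form
  (for finite-dimensional A, A (x) A is the dual of the space of bilinear forms on A x A).\<close>

definition tpair :: "('a \<Rightarrow> 'a \<Rightarrow> complex) \<Rightarrow> ('a \<times> 'a) list \<Rightarrow> complex" where
  "tpair \<phi> t = sum_list (map (\<lambda>(p, q). \<phi> p q) t)"

definition bilinear_form :: "(complex \<Rightarrow> 'a::ab_group_add \<Rightarrow> 'a) \<Rightarrow> ('a \<Rightarrow> 'a \<Rightarrow> complex) \<Rightarrow> bool" where
  "bilinear_form sc \<phi> \<longleftrightarrow>
     (\<forall>b. Vector_Spaces.linear sc (*) (\<lambda>a. \<phi> a b)) \<and> (\<forall>a. Vector_Spaces.linear sc (*) (\<phi> a))"

definition trilinear_form :: "(complex \<Rightarrow> 'a::ab_group_add \<Rightarrow> 'a) \<Rightarrow> ('a \<Rightarrow> 'a \<Rightarrow> 'a \<Rightarrow> complex) \<Rightarrow> bool" where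
  "trilinear_form sc \<psi> \<longleftrightarrow>
     (\<forall>b c. Vector_Spaces.linear sc (*) (\<lambda>a. \<psi> a b c)) \<and>
     (\<forall>a c. Vector_Spaces.linear sc (*) (\<lambda>b. \<psi> a b c)) \<and>
     (\<forall>a b. Vector_Spaces.linear sc (*) (\<lambda>c. \<psi> a b c))"

definition complex_bialgebra ::
  "(complex \<Rightarrow> 'a::ring_1 \<Rightarrow> 'a) \<Rightarrow> ('a \<Rightarrow> ('a \<times> 'a) list) \<Rightarrow> ('a \<Rightarrow> complex) \<Rightarrow> bool" where
  "complex_bialgebra sc \<Delta> \<epsilon> \<longleftrightarrow>
     vector_space sc \<and>
     (\<forall>c x y. sc c (x * y) = sc c x * y \<and> sc c (x * y) = x * sc c y) \<and>
     (\<forall>\<phi>. bilinear_form sc \<phi> \<longrightarrow> Vector_Spaces.linear sc (*) (\<lambda>x. tpair \<phi> (\<Delta> x))) \<and>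
     (\<forall>\<psi> x. trilinear_form sc \<psi> \<longrightarrow>
        sum_list (map (\<lambda>(a, b). tpair (\<lambda>p q. \<psi> p q b) (\<Delta> a)) (\<Delta> x)) =
        sum_list (map (\<lambda>(a, b). tpair (\<lambda>p q. \<psi> a p q) (\<Delta> b)) (\<Delta> x))) \<and>
     Vector_Spaces.linear sc (*) \<epsilon> \<and>
     (\<forall>x. sum_list (map (\<lambda>(a, b). sc (\<epsilon> a) b) (\<Delta> x)) = x) \<and>
     (\<forall>x. sum_list (map (\<lambda>(a, b). sc (\<epsilon> b) a) (\<Delta> x)) = x) \<and>
     (\<forall>\<phi> x y. bilinear_form sc \<phi> \<longrightarrow>
        tpair \<phi> (\<Delta> (x * y)) =
        sum_list (map (\<lambda>(a, b). sum_list (map (\<lambda>(c, d). \<phi> (a * c) (b * d)) (\<Delta> y))) (\<Delta> x))) \<and>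
     (\<forall>\<phi>. bilinear_form sc \<phi> \<longrightarrow> tpair \<phi> (\<Delta> 1) = \<phi> 1 1) \<and>
     (\<forall>x y. \<epsilon> (x * y) = \<epsilon> x * \<epsilon> y)"

definition complex_rep ::
  "(complex \<Rightarrow> 'a::ring_1 \<Rightarrow> 'a) \<Rightarrow> nat \<Rightarrow> ('a \<Rightarrow> nat \<Rightarrow> nat \<Rightarrow> complex) \<Rightarrow> bool" where
  "complex_rep sc d \<rho> \<longleftrightarrow>
     (\<forall>a\<in>{1..d}. \<forall>b\<in>{1..d}.
        Vector_Spaces.linear sc (*) (\<lambda>x. \<rho> x a b) \<and>
        \<rho> 1 a b = (if a = b then 1 else 0) \<and>
        (\<forall>x y. \<rho> (x * y) a b = (\<Sum>c = 1..d. \<rho> x a c * \<rho> y c b)))"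

definition complex_corep ::
  "(complex \<Rightarrow> 'a::ring_1 \<Rightarrow> 'a) \<Rightarrow> ('a \<Rightarrow> ('a \<times> 'a) list) \<Rightarrow> ('a \<Rightarrow> complex) \<Rightarrow>
   nat \<Rightarrow> (nat \<Rightarrow> nat \<Rightarrow> 'a) \<Rightarrow> bool" where
  "complex_corep sc \<Delta> \<epsilon> d v \<longleftrightarrow>
     (\<forall>i\<in>{1..d}. \<forall>j\<in>{1..d}.
        (\<forall>\<phi>. bilinear_form sc \<phi> \<longrightarrow>
           tpair \<phi> (\<Delta> (v i j)) = (\<Sum>k = 1..d. \<phi> (v i k) (v k j))) \<and>
        \<epsilon> (v i j) = (if i = j then 1 else 0))"

definition finite_basis :: "(complex \<Rightarrow> 'a::ab_group_add \<Rightarrow> 'a) \<Rightarrow> 'a set \<Rightarrow> bool" where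
  "finite_basis sc B \<longleftrightarrow> finite B \<and> \<not> module.dependent sc B \<and> module.span sc B = UNIV"

text \<open>Dual basis functional: dual_basis sc B y w = delta_y(w), the y-coordinate of w.\<close>

definition dual_basis :: "(complex \<Rightarrow> 'a::ab_group_add \<Rightarrow> 'a) \<Rightarrow> 'a set \<Rightarrow> 'a \<Rightarrow> 'a \<Rightarrow> complex" where
  "dual_basis sc B y w = module.representation sc B w y"

end

theory Submission imports Defs begin

lemma lin_expand:
  assumes vs: "vector_space sc" and bas: "finite_basis sc B"
    and lin: "Vector_Spaces.linear sc (*) f"
  shows "f w = (\<Sum>z\<in>B. dual_basis sc B z w * f z)"
proof -
  interpret vector_space sc by fact
  interpret l: Vector_Spaces.linear sc "(*)" f by fact
  have w: "w = (\<Sum>z\<in>B. sc (dual_basis sc B z w) z)"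
    using bas unfolding finite_basis_def dual_basis_def
    by (intro sum_representation_eq[symmetric]) auto
  have "f w = (\<Sum>z\<in>B. f (sc (dual_basis sc B z w) z))"
    by (subst w) (rule l.sum)
  also have "\<dots> = (\<Sum>z\<in>B. dual_basis sc B z w * f z)"
    by (simp add: l.scale)
  finally show ?thesis .
qed

lemma lin_dual:
  assumes vs: "vector_space sc" and bas: "finite_basis sc B"
  shows "Vector_Spaces.linear sc (*) (dual_basis sc B y)"
proof -
  interpret vector_space sc by fact
  show ?thesis unfolding dual_basis_def
    using bas linear_representation unfolding finite_basis_def by auto
qed

lemma vs_complex: "vector_space ((*)::complex\<Rightarrow>complex\<Rightarrow>complex)"
  by unfold_locales (auto simp: algebra_simps)

lemma lin_rmul:
  fixes sc :: "complex \<Rightarrow> 'a::ring_1 \<Rightarrow> 'a"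
  assumes vs: "vector_space sc" and m: "\<forall>c x y. sc c (x * y) = sc c x * y"
    and lin: "Vector_Spaces.linear sc (*) g"
  shows "Vector_Spaces.linear sc (*) (\<lambda>p. g (p * w))"
  using lin m vs unfolding Vector_Spaces.linear_iff by (simp add: distrib_right) (metis m)

lemma lin_lmul:
  fixes sc :: "complex \<Rightarrow> 'a::ring_1 \<Rightarrow> 'a"
  assumes vs: "vector_space sc" and m: "\<forall>c x y. sc c (x * y) = x * sc c y"
    and lin: "Vector_Spaces.linear sc (*) g"
  shows "Vector_Spaces.linear sc (*) (\<lambda>p. g (w * p))"
  using lin m vs unfolding Vector_Spaces.linear_iff by (simp add: distrib_left) (metis m)

lemma bil_prod:
  assumes "Vector_Spaces.linear sc (*) g" "Vector_Spaces.linear sc (*) h"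
  shows "bilinear_form sc (\<lambda>p q. g p * h q)"
  using assms unfolding bilinear_form_def Vector_Spaces.linear_iff
  by (simp add: algebra_simps)

lemma tpair_sum: "tpair (\<lambda>p q. \<Sum>z\<in>S. g z p q) t = (\<Sum>z\<in>S. tpair (g z) t)"
  by (induction t) (auto simp: tpair_def sum.distrib)

lemma tpair_cl: "tpair (\<lambda>p q. c * g p q) t = c * tpair g t"
  by (induction t) (auto simp: tpair_def algebra_simps)

lemma tpair_cr: "tpair (\<lambda>p q. g p q * c) t = tpair g t * c"
  by (induction t) (auto simp: tpair_def algebra_simps)

theorem theorem1:
  fixes sc :: "complex \<Rightarrow> 'a::ring_1 \<Rightarrow> 'a"
    and \<Delta> :: "'a \<Rightarrow> ('a \<times> 'a) list" and \<epsilon> :: "'a \<Rightarrow> complex"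
    and \<rho> :: "'a \<Rightarrow> nat \<Rightarrow> nat \<Rightarrow> complex" and d\<rho> :: nat
    and v :: "nat \<Rightarrow> nat \<Rightarrow> 'a" and dv :: nat
    and B :: "'a set"
  assumes bialg: "complex_bialgebra sc \<Delta> \<epsilon>"
    and rep: "complex_rep sc d\<rho> \<rho>"
    and corep: "complex_corep sc \<Delta> \<epsilon> dv v"
    and basis: "finite_basis sc B"
  defines "U \<equiv> \<lambda>a b i j. \<rho> (v i j) a b"
    and "R \<equiv> \<lambda>y x a b. tpair (\<lambda>p q. dual_basis sc B y p * \<rho> q a b) (\<Delta> x)"
    and "V \<equiv> \<lambda>y x i j. dual_basis sc B y (x * v i j)"
    and "u \<equiv> \<lambda>x. dual_basis sc B x 1"
    and "e \<equiv> \<lambda>x. \<epsilon> x"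
  shows
    "(\<forall>a\<in>{1..d\<rho>}. \<forall>b\<in>{1..d\<rho>}. \<forall>i\<in>{1..dv}. \<forall>j\<in>{1..dv}. \<forall>x\<in>B. \<forall>y\<in>B.
        (\<Sum>z\<in>B. R y z a b * V z x i j) =
        (\<Sum>z\<in>B. \<Sum>k = 1..dv. \<Sum>c = 1..d\<rho>. V y z i k * R z x a c * U c b k j))
   \<and> (\<forall>i\<in>{1..dv}. \<forall>j\<in>{1..dv}. \<forall>x\<in>B.
        (\<Sum>y\<in>B. e y * V y x i j) = (if i = j then 1 else 0) * e x)
   \<and> (\<forall>a\<in>{1..d\<rho>}. \<forall>b\<in>{1..d\<rho>}. \<forall>y\<in>B.
        (\<Sum>x\<in>B. R y x a b * u x) = (if a = b then 1 else 0) * u y)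
   \<and> (\<Sum>x\<in>B. e x * u x) = 1"
proof -
  let ?d = "dual_basis sc B"
  have vs: "vector_space sc" using bialg by (simp add: complex_bialgebra_def)
  have mr: "\<forall>c x y. sc c (x * y) = sc c x * y" and ml: "\<forall>c x y. sc c (x * y) = x * sc c y"
    using bialg unfolding complex_bialgebra_def by metis+
  have Dlin: "\<And>\<phi>. bilinear_form sc \<phi> \<Longrightarrow> Vector_Spaces.linear sc (*) (\<lambda>x. tpair \<phi> (\<Delta> x))"
    using bialg by (simp add: complex_bialgebra_def)
  have Dmul: "\<And>\<phi> x y. bilinear_form sc \<phi> \<Longrightarrow> tpair \<phi> (\<Delta> (x * y)) =
        sum_list (map (\<lambda>(a, b). sum_list (map (\<lambda>(c, d). \<phi> (a * c) (b * d)) (\<Delta> y))) (\<Delta> x))"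
    using bialg by (simp add: complex_bialgebra_def)
  have D1: "\<And>\<phi>. bilinear_form sc \<phi> \<Longrightarrow> tpair \<phi> (\<Delta> 1) = \<phi> 1 1"
    using bialg by (simp add: complex_bialgebra_def)
  have elin: "Vector_Spaces.linear sc (*) \<epsilon>" using bialg by (simp add: complex_bialgebra_def)
  have emul: "\<And>x y. \<epsilon> (x * y) = \<epsilon> x * \<epsilon> y" using bialg by (simp add: complex_bialgebra_def)
  have cou: "\<And>x. sum_list (map (\<lambda>(a, b). sc (\<epsilon> a) b) (\<Delta> x)) = x"
    using bialg by (simp add: complex_bialgebra_def)
  have rlin: "\<And>a b. a \<in> {1..d\<rho>} \<Longrightarrow> b \<in> {1..d\<rho>} \<Longrightarrow> Vector_Spaces.linear sc (*) (\<lambda>x. \<rho> x a b)"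
    and r1: "\<And>a b. a \<in> {1..d\<rho>} \<Longrightarrow> b \<in> {1..d\<rho>} \<Longrightarrow> \<rho> 1 a b = (if a = b then 1 else 0)"
    and rmul: "\<And>a b x y. a \<in> {1..d\<rho>} \<Longrightarrow> b \<in> {1..d\<rho>} \<Longrightarrow>
        \<rho> (x * y) a b = (\<Sum>c = 1..d\<rho>. \<rho> x a c * \<rho> y c b)"
    using rep by (simp_all add: complex_rep_def)
  have cD: "\<And>i j \<phi>. i \<in> {1..dv} \<Longrightarrow> j \<in> {1..dv} \<Longrightarrow> bilinear_form sc \<phi> \<Longrightarrow>
           tpair \<phi> (\<Delta> (v i j)) = (\<Sum>k = 1..dv. \<phi> (v i k) (v k j))"
    and ce: "\<And>i j. i \<in> {1..dv} \<Longrightarrow> j \<in> {1..dv} \<Longrightarrow> \<epsilon> (v i j) = (if i = j then 1 else 0)"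
    using corep by (simp_all add: complex_corep_def)
  have dlin: "\<And>y. Vector_Spaces.linear sc (*) (?d y)" by (rule lin_dual[OF vs basis])
  have fin: "finite B" using basis by (simp add: finite_basis_def)

  have e1: "\<epsilon> 1 = 1"
  proof (rule ccontr)
    assume ne: "\<epsilon> 1 \<noteq> 1"
    have "\<epsilon> 1 = \<epsilon> 1 * \<epsilon> 1" using emul[of 1 1] by simp
    with ne have z: "\<epsilon> 1 = 0" by (metis mult_cancel_right2)
    have "\<And>x. \<epsilon> x = 0" using emul[of _ 1] z by simp
    then have "(1::'a) = sum_list (map (\<lambda>(a, b). sc 0 b) (\<Delta> 1))" using cou[of 1] by simp
    also have "\<dots> = 0"
    proof -
      interpret vector_space sc by (rule vs)
      have "sum_list (map (\<lambda>(a, b). sc 0 b) t) = 0" for t :: "('a \<times> 'a) list"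
        by (induction t) auto
      then show ?thesis .
    qed
    finally show False by simp
  qed

  have P1: "(\<Sum>z\<in>B. R y z a b * V z x i j) =
        (\<Sum>z\<in>B. \<Sum>k = 1..dv. \<Sum>c = 1..d\<rho>. V y z i k * R z x a c * U c b k j)"
    if a: "a \<in> {1..d\<rho>}" and b: "b \<in> {1..d\<rho>}" and i: "i \<in> {1..dv}" and j: "j \<in> {1..dv}"
    for a b i j x y
  proof -
    define \<phi> where "\<phi> = (\<lambda>p q. ?d y p * \<rho> q a b)"
    have bphi: "bilinear_form sc \<phi>" unfolding \<phi>_def by (rule bil_prod[OF dlin rlin[OF a b]])
    have "(\<Sum>z\<in>B. R y z a b * V z x i j) = (\<Sum>z\<in>B. ?d z (x * v i j) * tpair \<phi> (\<Delta> z))"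
      by (simp add: R_def V_def \<phi>_def mult.commute)
    also have "\<dots> = tpair \<phi> (\<Delta> (x * v i j))"
      by (rule lin_expand[OF vs basis Dlin[OF bphi], symmetric])
    also have "\<dots> = sum_list (map (\<lambda>(a', b'). sum_list (map (\<lambda>(c, d). \<phi> (a' * c) (b' * d)) (\<Delta> (v i j)))) (\<Delta> x))"
      by (rule Dmul[OF bphi])
    also have "\<dots> = tpair (\<lambda>a' b'. \<Sum>k = 1..dv. \<Sum>c = 1..d\<rho>. ?d y (a' * v i k) * \<rho> b' a c * \<rho> (v k j) c b) (\<Delta> x)"
    proof -
      have pw: "sum_list (map (\<lambda>(c, d). \<phi> (a' * c) (b' * d)) (\<Delta> (v i j))) =
          (\<Sum>k = 1..dv. \<Sum>c = 1..d\<rho>. ?d y (a' * v i k) * \<rho> b' a c * \<rho> (v k j) c b)" for a' b'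
      proof -
        have bil: "bilinear_form sc (\<lambda>c d. \<phi> (a' * c) (b' * d))"
          unfolding \<phi>_def
          by (rule bil_prod[OF lin_lmul[OF vs ml dlin] lin_lmul[OF vs ml rlin[OF a b]]])
        have "sum_list (map (\<lambda>(c, d). \<phi> (a' * c) (b' * d)) (\<Delta> (v i j))) =
              tpair (\<lambda>c d. \<phi> (a' * c) (b' * d)) (\<Delta> (v i j))" by (simp add: tpair_def)
        also have "\<dots> = (\<Sum>k = 1..dv. \<phi> (a' * v i k) (b' * v k j))" by (rule cD[OF i j bil])
        also have "\<dots> = (\<Sum>k = 1..dv. \<Sum>c = 1..d\<rho>. ?d y (a' * v i k) * \<rho> b' a c * \<rho> (v k j) c b)"
          by (simp add: \<phi>_def rmul[OF a b] sum_distrib_left mult.assoc)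
        finally show ?thesis .
      qed
      show ?thesis by (simp add: tpair_def pw)
    qed
    also have "\<dots> = (\<Sum>k = 1..dv. \<Sum>c = 1..d\<rho>. tpair (\<lambda>p q. ?d y (p * v i k) * \<rho> q a c) (\<Delta> x) * \<rho> (v k j) c b)"
      by (subst tpair_sum, rule sum.cong[OF refl], subst tpair_sum, rule sum.cong[OF refl], rule tpair_cr)
    also have "\<dots> = (\<Sum>k = 1..dv. \<Sum>c = 1..d\<rho>. (\<Sum>z\<in>B. ?d y (z * v i k) * tpair (\<lambda>p q. ?d z p * \<rho> q a c) (\<Delta> x)) * \<rho> (v k j) c b)"
    proof -
      have "tpair (\<lambda>p q. ?d y (p * v i k) * \<rho> q a c) (\<Delta> x) =
          (\<Sum>z\<in>B. ?d y (z * v i k) * tpair (\<lambda>p q. ?d z p * \<rho> q a c) (\<Delta> x))" for k c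
      proof -
        have ex: "?d y (p * v i k) = (\<Sum>z\<in>B. ?d z p * ?d y (z * v i k))" for p
          by (rule lin_expand[OF vs basis lin_rmul[OF vs mr dlin]])
        have "(\<lambda>p q. ?d y (p * v i k) * \<rho> q a c) =
            (\<lambda>p q. \<Sum>z\<in>B. ?d y (z * v i k) * (?d z p * \<rho> q a c))"
          by (intro ext, subst ex) (simp add: sum_distrib_right sum_distrib_left mult_ac)
        then show ?thesis by (simp only: tpair_sum tpair_cl)
      qed
      then show ?thesis by simp
    qed
    also have "\<dots> = (\<Sum>k = 1..dv. \<Sum>c = 1..d\<rho>. \<Sum>z\<in>B. V y z i k * R z x a c * U c b k j)"
      unfolding V_def R_def U_def by (simp only: sum_distrib_right)
    also have "\<dots> = (\<Sum>k = 1..dv. \<Sum>z\<in>B. \<Sum>c = 1..d\<rho>. V y z i k * R z x a c * U c b k j)"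
      by (rule sum.cong[OF refl], rule sum.swap)
    also have "\<dots> = (\<Sum>z\<in>B. \<Sum>k = 1..dv. \<Sum>c = 1..d\<rho>. V y z i k * R z x a c * U c b k j)"
      by (rule sum.swap)
    finally show ?thesis .
  qed
  have P2: "(\<Sum>y\<in>B. e y * V y x i j) = (if i = j then 1 else 0) * e x"
    if i: "i \<in> {1..dv}" and j: "j \<in> {1..dv}" for i j x
  proof -
    have "(\<Sum>y\<in>B. e y * V y x i j) = \<epsilon> (x * v i j)"
      unfolding e_def V_def by (subst lin_expand[OF vs basis elin]) (simp add: mult.commute)
    then show ?thesis using ce[OF i j] emul by (simp add: e_def)
  qed
  have P3: "(\<Sum>x\<in>B. R y x a b * u x) = (if a = b then 1 else 0) * u y"
    if a: "a \<in> {1..d\<rho>}" and b: "b \<in> {1..d\<rho>}" for a b y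
  proof -
    have bphi: "bilinear_form sc (\<lambda>p q. ?d y p * \<rho> q a b)" by (rule bil_prod[OF dlin rlin[OF a b]])
    have "(\<Sum>x\<in>B. R y x a b * u x) = tpair (\<lambda>p q. ?d y p * \<rho> q a b) (\<Delta> 1)"
      unfolding R_def u_def by (subst lin_expand[OF vs basis Dlin[OF bphi]]) (simp add: mult.commute)
    then show ?thesis using D1[OF bphi] r1[OF a b] by (simp add: u_def mult.commute)
  qed
  have P4: "(\<Sum>x\<in>B. e x * u x) = 1"
  proof -
    have "(\<Sum>x\<in>B. e x * u x) = \<epsilon> 1"
      unfolding e_def u_def by (subst lin_expand[OF vs basis elin]) (simp add: mult.commute)
    then show ?thesis using e1 by simp
  qed
  show ?thesis using P1 P2 P3 P4 by blast
qed

end
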